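(* Let $K$ be a field, let $L\in K^{n\times n}[s]$, $L_1\in K^{n_1\times n_1}[s]$ be nonsingular polynomial matrices, and let $\Theta,\Theta_1\in K^{n_1\times n}_\infty(s)$ satisfy $\Theta L=L_1\Theta_1$. Let $\phi:U^L\to U^{L_1}$ be defined by $\phi\bar x=\rho_e^{L_1}(\Theta\bar x)$, $\bar x\in U^L$. Then the dual map $\phi^*:U^{L_1^T}\to U^{L^T}$ of $\phi$ with respect to the pairings $\langle\cdot,\cdot\rangle_L$ and $\langle\cdot,\cdot\rangle_{L_1}$ is given by $$\phi^*\,\rho^{L_1^T}w=\rho^{L^T}(\Theta_1^Tw)\qquad\text{for all } w\in K^{n_1}_\infty(s).$$
   Context: $K(s)$ denotes the field of rational functions over $K$. A rational function $f$ is proper if $f=0$ or $f=p/q$ with $p,q\in K[s]$, $q\ne0$, $\deg p\le\deg q$; $K_\infty(s)$ is the ring of proper rational functions, and $K^n_\infty(s)$, $K^{m\times r}_\infty(s)$ denote vectors/matrices with proper rational entries. One has $K(s)=K[s]\oplus s^{-1}K_\infty(s)$; $\pi_+:K(s)\to K[s]$ denotes the projection onto the polynomial part along $s^{-1}K_\infty(s)$, extended entrywise to vectors and matrices, and $(f)_0=(\pi_+f)(0)$ (also entrywise). For a nonsingular $M\in K^{m\times m}[s]$, define $\rho^M:K^m_\infty(s)\to K^m[s]$ by $\rho^M x=M\,\pi_+(M^{-1}x)$, write $\bar x=\rho^Mx$, and let $U^M=\operatorname{Im}\rho^M$, a $K_\infty(s)$-module (and $K$-vector space) via $q\cdot\rho^Mx=\rho^M(qx)$.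 The extension $\rho_e^{L_1}$ is $\rho_e^{L_1}w=L_1\pi_+(L_1^{-1}w)$ for $w\in K^{n_1}(s)$. The bilinear form $\langle \rho^{M^T}y,\rho^Mx\rangle_M=(y^TM^{-1}x)_0$, $x,y\in K^m_\infty(s)$, is a well-defined nondegenerate $K$-bilinear pairing $U^{M^T}\times U^M\to K$. The dual map $\phi^*$ of a $K$-linear $\phi:U^L\to U^{L_1}$ is the $K$-linear map $U^{L_1^T}\to U^{L^T}$ with $\langle\phi^*\eta,\xi\rangle_L=\langle\eta,\phi\xi\rangle_{L_1}$ for all $\eta\in U^{L_1^T}$, $\xi\in U^L$. *)

theory Defs
  imports "HOL-Analysis.Analysis" "HOL-Computational_Algebra.Polynomial_Factorial"
begin

text \<open>Rational functions K(s) are modelled as the fraction field of K[s].\<close>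
type_synonym 'a ratf = "'a poly fract"

definition proper :: "'a::field ratf \<Rightarrow> bool" where
  "proper f \<longleftrightarrow> f = 0 \<or> (\<exists>p q. q \<noteq> 0 \<and> f = Fract p q \<and> degree p \<le> degree q)"

definition properv :: "'a::field ratf ^ 'm \<Rightarrow> bool" where
  "properv x \<longleftrightarrow> (\<forall>i. proper (x $ i))"

definition properm :: "'a::field ratf ^ 'n ^ 'm \<Rightarrow> bool" where
  "properm A \<longleftrightarrow> (\<forall>i j. proper (A $ i $ j))"

text \<open>Polynomial part pi_+ : the polynomial part of p/q is p div q (independent of the representation).\<close>
definition pplus :: "'a::field ratf \<Rightarrow> 'a poly" where
  "pplus f = (let pq = (SOME pq. snd pq \<noteq> 0 \<and> f = Fract (fst pq) (snd pq)) in fst pq div snd pq)"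

definition pplusv :: "'a::field ratf ^ 'm \<Rightarrow> 'a poly ^ 'm" where
  "pplusv x = (\<chi> i. pplus (x $ i))"

definition at0 :: "'a::field ratf \<Rightarrow> 'a" where
  "at0 f = poly (pplus f) 0"

definition liftv :: "'a::field poly ^ 'm \<Rightarrow> 'a ratf ^ 'm" where
  "liftv x = (\<chi> i. to_fract (x $ i))"

definition liftm :: "'a::field poly ^ 'n ^ 'm \<Rightarrow> 'a ratf ^ 'n ^ 'm" where
  "liftm M = (\<chi> i j. to_fract (M $ i $ j))"

text \<open>rho_e^M w = M pi_+(M^{-1} w) for arbitrary rational w; rho^M is its restriction to proper vectors.\<close>
definition rho_e :: "'a::field poly ^ 'm ^ 'm \<Rightarrow> 'a ratf ^ 'm \<Rightarrow> 'a poly ^ 'm" where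
  "rho_e M w = M *v pplusv (matrix_inv (liftm M) *v w)"

definition rho :: "'a::field poly ^ 'm ^ 'm \<Rightarrow> 'a ratf ^ 'm \<Rightarrow> 'a poly ^ 'm" where
  "rho M x = rho_e M x"

definition U :: "'a::field poly ^ 'm ^ 'm \<Rightarrow> ('a poly ^ 'm) set" where
  "U M = rho M ` {x. properv x}"

definition ksmult :: "'a::field \<Rightarrow> 'a poly ^ 'm \<Rightarrow> 'a poly ^ 'm" where
  "ksmult c v = (\<chi> i. smult c (v $ i))"

text \<open>The pairing <rho^{M^T} y, rho^M x>_M = (y^T M^{-1} x)_0 on U^{M^T} x U^M
  (well defined by the context; here defined through chosen representatives).\<close>
definition pairing :: "'a::field poly ^ 'm ^ 'm \<Rightarrow> 'a poly ^ 'm \<Rightarrow> 'a poly ^ 'm \<Rightarrow> 'a" where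
  "pairing M \<eta> \<xi> = (SOME c. \<exists>x y. properv x \<and> properv y \<and>
      \<eta> = rho (transpose M) y \<and> \<xi> = rho M x \<and>
      c = at0 (\<Sum>i\<in>UNIV. y $ i * (matrix_inv (liftm M) *v x) $ i))"

definition is_dual_map ::
  "'a::field poly ^ 'n ^ 'n \<Rightarrow> 'a poly ^ 'm ^ 'm \<Rightarrow> ('a poly ^ 'n \<Rightarrow> 'a poly ^ 'm)
     \<Rightarrow> ('a poly ^ 'm \<Rightarrow> 'a poly ^ 'n) \<Rightarrow> bool" where
  "is_dual_map L L1 \<phi> \<psi> \<longleftrightarrow>
     (\<forall>\<eta>\<in>U (transpose L1). \<psi> \<eta> \<in> U (transpose L)) \<and>
     (\<forall>a b \<eta> \<eta>'. \<eta> \<in> U (transpose L1) \<longrightarrow> \<eta>' \<in> U (transpose L1) \<longrightarrow>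
        \<psi> (ksmult a \<eta> + ksmult b \<eta>') = ksmult a (\<psi> \<eta>) + ksmult b (\<psi> \<eta>')) \<and>
     (\<forall>\<eta>\<in>U (transpose L1). \<forall>\<xi>\<in>U L. pairing L (\<psi> \<eta>) \<xi> = pairing L1 \<eta> (\<phi> \<xi>))"

end

theory Submission
  imports Defs
begin


lemma fract_rep: "\<exists>p q. q \<noteq> 0 \<and> (f::'a::idom fract) = Fract p q"
  by (cases f) auto

lemma pplus_Fract:
  fixes p q :: "'a::field poly"
  assumes "q \<noteq> 0" shows "pplus (Fract p q) = p div q"
proof -
  define pq where "pq = (SOME pq. snd pq \<noteq> 0 \<and> Fract p q = Fract (fst pq) (snd (pq::'a poly \<times> 'a poly)))"
  have ex: "\<exists>pq. snd pq \<noteq> 0 \<and> Fract p q = Fract (fst pq) (snd (pq::'a poly \<times> 'a poly))"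
    using assms by (intro exI[of _ "(p,q)"]) auto
  have h: "snd pq \<noteq> 0 \<and> Fract p q = Fract (fst pq) (snd pq)"
    unfolding pq_def by (rule someI_ex[OF ex])
  then have e: "p * snd pq = fst pq * q" using assms eq_fract(1) by blast
  have "fst pq div snd pq = (fst pq * q) div (snd pq * q)" using assms by simp
  also have "\<dots> = (p * snd pq) div (q * snd pq)" using e by (simp add: mult.commute)
  also have "\<dots> = p div q" using h by simp
  finally show ?thesis unfolding pplus_def pq_def[symmetric] Let_def by simp
qed

lemma pplus_to_fract [simp]: "pplus (to_fract p) = (p::'a::field poly)"
  by (simp add: to_fract_def pplus_Fract)

lemma pplus_0 [simp]: "pplus 0 = (0::'a::field poly)"
  using pplus_to_fract[of "0::'a poly"] by simp

lemma pplus_add: "pplus (f + g) = pplus f + pplus (g::'a::field ratf)"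
proof -
  obtain p q where f: "q \<noteq> 0" "f = Fract p q" using fract_rep by blast
  obtain p' q' where g: "q' \<noteq> 0" "g = Fract p' q'" using fract_rep by blast
  have "pplus (f + g) = (p * q' + p' * q) div (q * q')" using f g by (simp add: pplus_Fract)
  also have "\<dots> = (p * q') div (q * q') + (p' * q) div (q' * q)"
    by (simp add: poly_div_add_left mult.commute)
  also have "\<dots> = pplus f + pplus g" using f g by (simp add: pplus_Fract)
  finally show ?thesis .
qed

lemma pplus_uminus: "pplus (- f) = - pplus (f::'a::field ratf)"
proof -
  have "pplus f + pplus (- f) = 0" using pplus_add[of f "-f"] by simp
  thus ?thesis by (metis add.commute eq_neg_iff_add_eq_0)
qed

lemma pplus_diff: "pplus (f - g) = pplus f - pplus (g::'a::field ratf)"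
  using pplus_add[of f "-g"] by (simp add: pplus_uminus)

lemma pplus_sum: "pplus (sum f A) = sum (\<lambda>i. pplus (f i :: 'a::field ratf)) A"
  by (induction A rule: infinite_finite_induct) (auto simp: pplus_add)

lemma pplus_const_mult: "pplus (to_fract [:a:] * f) = smult a (pplus (f::'a::field ratf))"
proof -
  obtain p q where f: "q \<noteq> 0" "f = Fract p q" using fract_rep by blast
  thus ?thesis by (simp add: to_fract_def pplus_Fract div_smult_left)
qed

lemma at0_add: "at0 (f + g) = at0 f + at0 (g::'a::field ratf)"
  by (simp add: at0_def pplus_add)
lemma at0_diff: "at0 (f - g) = at0 f - at0 (g::'a::field ratf)"
  by (simp add: at0_def pplus_diff)

lemma proper_alt: "proper f \<longleftrightarrow> (\<exists>p q. q \<noteq> 0 \<and> f = Fract p q \<and> degree p \<le> degree (q::'a::field poly))"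
  unfolding proper_def
  by (metis Zero_fract_def degree_0 le0 one_neq_zero)

lemma proper_add: "proper f \<Longrightarrow> proper g \<Longrightarrow> proper (f + (g::'a::field ratf))"
  unfolding proper_alt
proof (elim exE conjE)
  fix p q p' q' :: "'a poly"
  assume a: "q \<noteq> 0" "f = Fract p q" "degree p \<le> degree q" "q' \<noteq> 0" "g = Fract p' q'" "degree p' \<le> degree q'"
  have "degree (p * q' + p' * q) \<le> degree (q * q')"
  proof (rule degree_add_le)
    show "degree (p * q') \<le> degree (q * q')" using a degree_mult_le[of p q'] by (simp add: degree_mult_eq)
    show "degree (p' * q) \<le> degree (q * q')" using a degree_mult_le[of p' q] by (simp add: degree_mult_eq)
  qed
  thus "\<exists>p q. q \<noteq> 0 \<and> f + g = Fract p q \<and> degree p \<le> degree q"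
    using a by (intro exI[of _ "p * q' + p' * q"] exI[of _ "q * q'"]) auto
qed

lemma proper_mult: "proper f \<Longrightarrow> proper g \<Longrightarrow> proper (f * (g::'a::field ratf))"
  unfolding proper_alt
proof (elim exE conjE)
  fix p q p' q' :: "'a poly"
  assume a: "q \<noteq> 0" "f = Fract p q" "degree p \<le> degree q" "q' \<noteq> 0" "g = Fract p' q'" "degree p' \<le> degree q'"
  have "degree (p * p') \<le> degree (q * q')" using a degree_mult_le[of p p'] by (simp add: degree_mult_eq)
  thus "\<exists>p q. q \<noteq> 0 \<and> f * g = Fract p q \<and> degree p \<le> degree q"
    using a by (intro exI[of _ "p * p'"] exI[of _ "q * q'"]) auto
qed

lemma proper_0 [simp]: "proper 0"
  by (simp add: proper_def)

lemma proper_uminus: "proper f \<Longrightarrow> proper (- (f::'a::field ratf))"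
  unfolding proper_alt by (metis degree_minus minus_fract)

lemma proper_diff: "proper f \<Longrightarrow> proper g \<Longrightarrow> proper (f - (g::'a::field ratf))"
  using proper_add[of f "-g"] proper_uminus[of g] by simp

lemma proper_sum: "(\<And>i. i \<in> A \<Longrightarrow> proper (f i)) \<Longrightarrow> proper (sum f A :: 'a::field ratf)"
  by (induction A rule: infinite_finite_induct) (auto intro: proper_add)

lemma proper_const: "proper (to_fract [:a:] :: 'a::field ratf)"
  unfolding proper_alt to_fract_def by (intro exI[of _ "[:a:]"] exI[of _ 1]) auto

lemma proper_inv_monom: "proper (Fract 1 (monom 1 k) :: 'a::field ratf)"
  unfolding proper_alt by (intro exI[of _ 1] exI[of _ "monom 1 k"]) (auto simp: degree_monom_eq)

lemma pplus_mult_sp: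
  assumes "proper f" "pplus g = 0" shows "pplus (f * (g::'a::field ratf)) = 0"
proof -
  obtain p q where a: "q \<noteq> 0" "f = Fract p q" "degree p \<le> degree q" using assms(1) unfolding proper_alt by blast
  obtain p' q' where b: "q' \<noteq> 0" "g = Fract p' q'" using fract_rep by blast
  have "p' div q' = 0" using assms(2) b by (simp add: pplus_Fract)
  hence "p' = 0 \<or> degree p' < degree q'" using b by (simp add: div_poly_eq_0_iff)
  hence "(p * p') div (q * q') = 0"
  proof
    assume "degree p' < degree q'"
    hence "p = 0 \<or> degree (p * p') < degree (q * q')" using a b
      by (cases "p = 0"; cases "p' = 0") (auto simp: degree_mult_eq)
    thus ?thesis by (auto simp: div_poly_eq_0_iff)
  qed simp
  thus ?thesis using a b by (simp add: pplus_Fract)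
qed

lemma pplus_sp_mult: "pplus f = 0 \<Longrightarrow> proper g \<Longrightarrow> pplus (f * (g::'a::field ratf)) = 0"
  using pplus_mult_sp[of g f] by (simp add: mult.commute)

lemma pplus_remainder: "pplus (f - to_fract (pplus f)) = (0::'a::field poly)"
  by (simp add: pplus_diff)

lemma coeff_div_monom: "coeff (P div monom 1 k) 0 = coeff (P::'a::field poly) k"
proof -
  have "P = P div monom 1 k * monom 1 k + P mod monom 1 k" by (metis div_mult_mod_eq)
  hence "coeff P k = coeff (P div monom 1 k * monom 1 k) k + coeff (P mod monom 1 k) k"
    by (metis coeff_add)
  moreover have "coeff (P mod monom 1 k) k = 0"
  proof (cases "P mod monom 1 k = 0")
    case False
    hence "degree (P mod monom 1 k) < k"
      using degree_mod_less'[of "monom 1 k" P] by (simp add: degree_monom_eq)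
    thus ?thesis by (simp add: coeff_eq_0)
  qed simp
  moreover have "coeff (P div monom 1 k * monom 1 k) k = coeff (P div monom 1 k) 0"
    by (simp add: mult.commute coeff_monom_mult)
  ultimately show ?thesis by simp
qed

lemma at0_inv_monom: "at0 (f * Fract 1 (monom 1 k)) = coeff (pplus (f::'a::field ratf)) k"
proof -
  obtain p q where a: "q \<noteq> 0" "f = Fract p q" using fract_rep by blast
  have "monom 1 k \<noteq> (0::'a poly)" by simp
  hence "pplus (f * Fract 1 (monom 1 k)) = (p div q) div monom 1 k"
    using a by (simp add: pplus_Fract poly_div_mult_right)
  thus ?thesis using a by (simp add: at0_def pplus_Fract coeff_div_monom poly_0_coeff_0)
qed


declare transpose_matrix_vector[simp del]

abbreviation Minv :: "'a::field poly ^'n^'n \<Rightarrow> 'a ratf ^'n^'n" where "Minv M \<equiv> matrix_inv (liftm M)"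

lemma to_fract_prod: "to_fract (prod f A) = prod (\<lambda>x. to_fract (f x)) A"
  by (induction A rule: infinite_finite_induct) auto

lemma det_liftm: "det (liftm M) = to_fract (det (M::'a::field poly^'n^'n))"
  unfolding det_def liftm_def by (auto simp: to_fract_prod sign_def intro!: sum.cong)

lemma liftm_inv:
  assumes "det (M::'a::field poly^'n^'n) \<noteq> 0"
  shows "liftm M ** Minv M = mat 1" "Minv M ** liftm M = mat 1"
proof -
  have "invertible (liftm M)" using assms by (simp add: invertible_det_nz det_liftm)
  then have "\<exists>A'. liftm M ** A' = mat 1 \<and> A' ** liftm M = mat 1" unfolding invertible_def .
  then have "liftm M ** Minv M = mat 1 \<and> Minv M ** liftm M = mat 1"
    unfolding matrix_inv_def by (rule someI_ex)
  thus "liftm M ** Minv M = mat 1" "Minv M ** liftm M = mat 1" by auto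
qed

lemma liftm_transpose: "liftm (transpose M) = transpose (liftm M)"
  by (simp add: liftm_def transpose_def vec_eq_iff)

lemma Minv_transpose:
  assumes "det (M::'a::field poly^'n^'n) \<noteq> 0"
  shows "Minv (transpose M) = transpose (Minv M)"
proof -
  have d: "det (transpose M) \<noteq> 0" using assms by (simp add: det_transpose)
  have "transpose (Minv M) ** liftm (transpose M) = mat 1"
    by (simp add: liftm_transpose matrix_transpose_mul[symmetric] liftm_inv(1)[OF assms])
  hence "Minv (transpose M) = (transpose (Minv M) ** liftm (transpose M)) ** Minv (transpose M)" by simp
  also have "\<dots> = transpose (Minv M)" by (simp add: matrix_mul_assoc[symmetric] liftm_inv[OF d])
  finally show ?thesis .
qed

lemma liftv_mult: "liftv (M *v p) = liftm M *v liftv p"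
  by (simp add: liftv_def liftm_def matrix_vector_mult_def vec_eq_iff)

lemma liftv_0 [simp]: "liftv 0 = 0"
  by (simp add: liftv_def vec_eq_iff)

lemma mult_eq_0_poly:
  assumes "det (M::'a::field poly^'n^'n) \<noteq> 0" "M *v p = 0" shows "p = 0"
proof -
  have "liftm M *v liftv p = 0" using assms(2) by (metis liftv_mult liftv_0)
  hence "Minv M *v (liftm M *v liftv p) = 0" by simp
  hence "liftv p = 0" by (simp add: matrix_vector_mul_assoc liftm_inv[OF assms(1)])
  thus ?thesis by (simp add: liftv_def vec_eq_iff)
qed

lemma pplusv_diff: "pplusv (a - b) = pplusv a - pplusv (b::'a::field ratf^'n)"
  by (simp add: pplusv_def vec_eq_iff pplus_diff)

lemma rho_diff: "rho M a - rho M b = M *v pplusv (Minv M *v (a - b))"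
  by (simp add: rho_def rho_e_def pplusv_diff matrix_vector_mult_diff_distrib)

lemma rho_eq_sp:
  assumes "det (M::'a::field poly^'n^'n) \<noteq> 0" "rho M a = rho M b"
  shows "pplus ((Minv M *v (a - b)) $ i) = 0"
proof -
  have "M *v pplusv (Minv M *v (a - b)) = 0" using rho_diff[of M a b] assms(2) by simp
  hence "pplusv (Minv M *v (a - b)) = 0" by (rule mult_eq_0_poly[OF assms(1)])
  thus ?thesis by (simp add: pplusv_def vec_eq_iff)
qed

lemma properv_mult: "properm A \<Longrightarrow> properv x \<Longrightarrow> properv (A *v x)"
  by (auto simp: properm_def properv_def matrix_vector_mult_def intro!: proper_sum proper_mult)

lemma properm_transpose: "properm A \<Longrightarrow> properm (transpose A)"
  by (simp add: properm_def transpose_def)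

lemma dot_transpose:
  fixes A :: "'a::comm_ring_1^'n^'m"
  shows "(\<Sum>i\<in>UNIV. y $ i * (A *v x) $ i) = (\<Sum>i\<in>UNIV. (transpose A *v y) $ i * x $ i)"
  unfolding matrix_vector_mult_def transpose_def
  by (simp add: sum_distrib_left sum_distrib_right mult.assoc mult.left_commute) (rule sum.swap)

lemma at0_sum_sp:
  "(\<And>i. proper (a i)) \<Longrightarrow> (\<And>i. pplus (b i) = 0) \<Longrightarrow> at0 (\<Sum>i\<in>A. a i * b i :: 'a::field ratf) = 0"
  by (simp add: at0_def pplus_sum pplus_mult_sp)

lemma G_key:
  assumes M: "det (M::'a::field poly^'n^'n) \<noteq> 0"
    and pr: "properv x" "properv x'" "properv y" "properv y'"
    and ex: "rho M x = rho M x'" and ey: "rho (transpose M) y = rho (transpose M) y'"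
  shows "at0 (\<Sum>i\<in>UNIV. y$i * (Minv M *v x)$i) = at0 (\<Sum>i\<in>UNIV. y'$i * (Minv M *v x')$i)"
proof -
  have sx: "\<And>i. pplus ((Minv M *v (x - x'))$i) = 0" using rho_eq_sp[OF M ex] .
  have Mt: "det (transpose M) \<noteq> 0" using M by (simp add: det_transpose)
  have sy: "\<And>i. pplus ((Minv (transpose M) *v (y - y'))$i) = 0" using rho_eq_sp[OF Mt ey] .
  have "at0 (\<Sum>i\<in>UNIV. y$i * (Minv M *v x)$i) - at0 (\<Sum>i\<in>UNIV. y$i * (Minv M *v x')$i)
      = at0 (\<Sum>i\<in>UNIV. y$i * (Minv M *v (x - x'))$i)"
    by (simp add: at0_diff[symmetric] sum_subtractf[symmetric] matrix_vector_mult_diff_distrib right_diff_distrib)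
  also have "\<dots> = 0" using pr sx by (intro at0_sum_sp) (auto simp: properv_def)
  finally have 1: "at0 (\<Sum>i\<in>UNIV. y$i * (Minv M *v x)$i) = at0 (\<Sum>i\<in>UNIV. y$i * (Minv M *v x')$i)" by simp
  have "at0 (\<Sum>i\<in>UNIV. y$i * (Minv M *v x')$i) - at0 (\<Sum>i\<in>UNIV. y'$i * (Minv M *v x')$i)
      = at0 (\<Sum>i\<in>UNIV. (y - y')$i * (Minv M *v x')$i)"
    by (simp add: at0_diff[symmetric] sum_subtractf[symmetric] left_diff_distrib)
  also have "\<dots> = at0 (\<Sum>i\<in>UNIV. (transpose (Minv M) *v (y - y'))$i * x'$i)" by (rule arg_cong[where f=at0], rule dot_transpose)
  also have "\<dots> = at0 (\<Sum>i\<in>UNIV. x'$i * (Minv (transpose M) *v (y - y'))$i)"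
    by (simp add: Minv_transpose[OF M] mult.commute)
  also have "\<dots> = 0" using pr sy by (intro at0_sum_sp) (auto simp: properv_def)
  finally show ?thesis using 1 by simp
qed

lemma pairing_eq:
  assumes M: "det (M::'a::field poly^'n^'n) \<noteq> 0" and pr: "properv x" "properv y"
  shows "pairing M (rho (transpose M) y) (rho M x) = at0 (\<Sum>i\<in>UNIV. y$i * (Minv M *v x)$i)"
  unfolding pairing_def
proof (rule someI2_ex)
  show "\<exists>c. \<exists>x' y'. properv x' \<and> properv y' \<and> rho (transpose M) y = rho (transpose M) y' \<and>
      rho M x = rho M x' \<and> c = at0 (\<Sum>i\<in>UNIV. y' $ i * (Minv M *v x') $ i)"
    using pr by blast
  fix c assume "\<exists>x' y'. properv x' \<and> properv y' \<and> rho (transpose M) y = rho (transpose M) y' \<and>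
      rho M x = rho M x' \<and> c = at0 (\<Sum>i\<in>UNIV. y' $ i * (Minv M *v x') $ i)"
  then obtain x' y' where h: "properv x'" "properv y'" "rho (transpose M) y = rho (transpose M) y'"
      "rho M x = rho M x'" "c = at0 (\<Sum>i\<in>UNIV. y' $ i * (Minv M *v x') $ i)" by blast
  show "c = at0 (\<Sum>i\<in>UNIV. y$i * (Minv M *v x)$i)"
    using G_key[OF M pr(1) h(1) pr(2) h(2) h(4) h(3)] h(5) by simp
qed


lemma smult_sum_right: "smult a (sum f A) = sum (\<lambda>i. smult a (f i)) A"
  by (induction A rule: infinite_finite_induct) (auto simp: smult_add_right)

definition cst :: "'a::field \<Rightarrow> 'a ratf" where "cst a = to_fract [:a:]"

lemma pplusv_lin: "pplusv (cst a *s u + cst b *s v) = ksmult a (pplusv u) + ksmult b (pplusv v)"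
  by (simp add: pplusv_def ksmult_def vec_eq_iff pplus_add pplus_const_mult cst_def)

lemma mv_scalar: "A *v (c *s v) = c *s (A *v v)" for A :: "'a::comm_ring_1^'n^'m"
  by (simp add: vec_eq_iff matrix_vector_mult_def sum_distrib_left mult.left_commute)

lemma mv_ksmult: "M *v ksmult a v = ksmult a (M *v v)"
  by (simp add: vec_eq_iff matrix_vector_mult_def ksmult_def smult_sum_right)

lemma rho_lin: "rho M (cst a *s u + cst b *s v) = ksmult a (rho M u) + ksmult b (rho M v)"
  by (simp add: rho_def rho_e_def matrix_vector_right_distrib mv_scalar pplusv_lin mv_ksmult)

lemma properv_lin: "properv u \<Longrightarrow> properv v \<Longrightarrow> properv (cst a *s u + cst b *s v)"
  by (simp add: properv_def cst_def proper_add proper_mult proper_const)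

lemma theta_rel:
  assumes L: "det L \<noteq> 0" and L1: "det L1 \<noteq> 0" and rel: "\<Theta> ** liftm L = liftm L1 ** \<Theta>1"
  shows "\<Theta>1 ** Minv L = Minv L1 ** \<Theta>"
proof -
  have "Minv L1 ** \<Theta> = (Minv L1 ** \<Theta>) ** (liftm L ** Minv L)" by (simp add: liftm_inv(1)[OF L])
  also have "\<dots> = Minv L1 ** (\<Theta> ** liftm L) ** Minv L" by (simp add: matrix_mul_assoc)
  also have "\<dots> = (Minv L1 ** liftm L1) ** \<Theta>1 ** Minv L" by (simp add: rel matrix_mul_assoc)
  also have "\<dots> = \<Theta>1 ** Minv L" by (simp add: liftm_inv(2)[OF L1])
  finally show ?thesis ..
qed

lemma pplusv_sp:
  assumes "properm A" "\<And>i. pplus (d $ i) = 0"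
  shows "pplusv (A *v d) = (0::'a::field poly^'m)"
  using assms by (simp add: pplusv_def vec_eq_iff matrix_vector_mult_def pplus_sum pplus_mult_sp properm_def)

lemma phi_rho:
  assumes L: "det L \<noteq> 0" and L1: "det L1 \<noteq> 0" and rel: "\<Theta> ** liftm L = liftm L1 ** \<Theta>1"
    and P1: "properm \<Theta>1"
  shows "rho_e L1 (\<Theta> *v liftv (rho L x)) = rho L1 (\<Theta> *v x)"
proof -
  define q where "q = Minv L *v x"
  define d where "d = q - liftv (pplusv q)"
  have dsp: "\<And>i. pplus (d$i) = 0" by (simp add: d_def liftv_def pplusv_def pplus_diff)
  have xq: "x = liftm L *v q" by (simp add: q_def matrix_vector_mul_assoc liftm_inv(1)[OF L])
  have "liftv (rho L x) = liftm L *v liftv (pplusv q)" by (simp add: rho_def rho_e_def liftv_mult q_def)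
  also have "\<dots> = x - liftm L *v d" by (simp add: xq d_def matrix_vector_mult_diff_distrib)
  finally have lx: "liftv (rho L x) = x - liftm L *v d" .
  have "\<Theta> *v liftv (rho L x) = \<Theta> *v x - liftm L1 *v (\<Theta>1 *v d)"
    by (simp add: lx matrix_vector_mult_diff_distrib matrix_vector_mul_assoc rel)
  hence e: "Minv L1 *v (\<Theta> *v liftv (rho L x)) = Minv L1 *v (\<Theta> *v x) - \<Theta>1 *v d"
    by (simp add: matrix_vector_mult_diff_distrib matrix_vector_mul_assoc matrix_mul_assoc liftm_inv(2)[OF L1])
  have z: "pplusv (\<Theta>1 *v d) = 0" using pplusv_sp[OF P1 dsp] .
  have "rho_e L1 (\<Theta> *v liftv (rho L x)) = L1 *v pplusv (Minv L1 *v (\<Theta> *v liftv (rho L x)))"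
    by (simp only: rho_e_def)
  also have "\<dots> = L1 *v pplusv (Minv L1 *v (\<Theta> *v x))" by (simp only: e pplusv_diff z diff_zero)
  also have "\<dots> = rho L1 (\<Theta> *v x)" by (simp only: rho_def rho_e_def)
  finally show ?thesis .
qed

lemma nondeg:
  assumes M: "det (M::'a::field poly^'n^'n) \<noteq> 0"
    and h: "\<And>x. properv x \<Longrightarrow> at0 (\<Sum>i\<in>UNIV. y$i * (Minv M *v x)$i) = at0 (\<Sum>i\<in>UNIV. y0$i * (Minv M *v x)$i)"
  shows "rho (transpose M) y = rho (transpose M) y0"
proof -
  define u where "u = Minv (transpose M) *v (y - y0)"
  have key: "at0 (\<Sum>i\<in>UNIV. u$i * x$i) = 0" if x: "properv x" for x
  proof -
    have "at0 (\<Sum>i\<in>UNIV. y$i * (Minv M *v x)$i) - at0 (\<Sum>i\<in>UNIV. y0$i * (Minv M *v x)$i)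
        = at0 (\<Sum>i\<in>UNIV. (y - y0)$i * (Minv M *v x)$i)"
      by (simp add: at0_diff[symmetric] sum_subtractf[symmetric] left_diff_distrib)
    also have "\<dots> = at0 (\<Sum>i\<in>UNIV. (transpose (Minv M) *v (y - y0))$i * x$i)"
      by (rule arg_cong[where f=at0], rule dot_transpose)
    finally show ?thesis using h[OF x] by (simp add: u_def Minv_transpose[OF M])
  qed
  have sp: "pplus (u$i) = 0" for i
  proof (rule poly_eqI)
    fix k
    define x where "x = (\<chi> j. if j = i then Fract 1 (monom 1 k) else (0::'a ratf))"
    have px: "properv x" by (simp add: x_def properv_def proper_inv_monom)
    have "(\<Sum>j\<in>UNIV. u$j * x$j) = (\<Sum>j\<in>UNIV. if j = i then u$i * Fract 1 (monom 1 k) else 0)"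
      by (rule sum.cong) (auto simp: x_def)
    also have "\<dots> = u$i * Fract 1 (monom 1 k)" by simp
    finally have "at0 (u$i * Fract 1 (monom 1 k)) = 0" using key[OF px] by simp
    thus "coeff (pplus (u$i)) k = coeff 0 k" by (simp add: at0_inv_monom)
  qed
  have "pplusv u = 0" using sp by (simp add: pplusv_def vec_eq_iff)
  hence "rho (transpose M) y - rho (transpose M) y0 = 0" by (simp add: rho_diff u_def)
  thus ?thesis by simp
qed


definition psi0 :: "'K::field poly ^ 'n ^ 'n \<Rightarrow> 'K poly ^ 'm ^ 'm \<Rightarrow> 'K ratf ^ 'n ^ 'm \<Rightarrow> 'K poly ^ 'm \<Rightarrow> 'K poly ^ 'n" where
  "psi0 L L1 \<Theta>1 \<eta> = rho (transpose L) (transpose \<Theta>1 *v (SOME w. properv w \<and> \<eta> = rho (transpose L1) w))"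

lemma psi_wd:
  assumes L: "det L \<noteq> 0" and L1: "det L1 \<noteq> 0" and rel: "\<Theta> ** liftm L = liftm L1 ** \<Theta>1"
    and P: "properm \<Theta>" and e: "rho (transpose L1) w = rho (transpose L1) w'"
  shows "rho (transpose L) (transpose \<Theta>1 *v w) = rho (transpose L) (transpose \<Theta>1 *v w')"
proof -
  have tr: "Minv (transpose L) ** transpose \<Theta>1 = transpose \<Theta> ** Minv (transpose L1)"
    using theta_rel[OF L L1 rel] by (metis matrix_transpose_mul Minv_transpose L L1)
  have L1t: "det (transpose L1) \<noteq> 0" using L1 by simp
  have sp: "\<And>i. pplus ((Minv (transpose L1) *v (w - w'))$i) = 0" using rho_eq_sp[OF L1t e] .
  have "Minv (transpose L) *v (transpose \<Theta>1 *v w - transpose \<Theta>1 *v w')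
      = transpose \<Theta> *v (Minv (transpose L1) *v (w - w'))"
    by (simp add: matrix_vector_mult_diff_distrib[symmetric] matrix_vector_mul_assoc tr)
  hence "pplusv (Minv (transpose L) *v (transpose \<Theta>1 *v w - transpose \<Theta>1 *v w')) = 0"
    using pplusv_sp[OF properm_transpose[OF P] sp] by simp
  hence "rho (transpose L) (transpose \<Theta>1 *v w) - rho (transpose L) (transpose \<Theta>1 *v w') = 0"
    by (simp add: rho_diff)
  thus ?thesis by simp
qed

lemma psi0_eq:
  assumes L: "det L \<noteq> 0" and L1: "det L1 \<noteq> 0" and rel: "\<Theta> ** liftm L = liftm L1 ** \<Theta>1"
    and P: "properm \<Theta>" and w: "properv w"
  shows "psi0 L L1 \<Theta>1 (rho (transpose L1) w) = rho (transpose L) (transpose \<Theta>1 *v w)"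
proof -
  define w' where "w' = (SOME w'. properv w' \<and> rho (transpose L1) w = rho (transpose L1) w')"
  have "properv w' \<and> rho (transpose L1) w = rho (transpose L1) w'"
    unfolding w'_def by (rule someI_ex) (use w in blast)
  hence "rho (transpose L) (transpose \<Theta>1 *v w') = rho (transpose L) (transpose \<Theta>1 *v w)"
    using psi_wd[OF L L1 rel P] by metis
  thus ?thesis by (simp add: psi0_def w'_def)
qed

lemma psi0_pair:
  assumes L: "det L \<noteq> 0" and L1: "det L1 \<noteq> 0" and rel: "\<Theta> ** liftm L = liftm L1 ** \<Theta>1"
    and P: "properm \<Theta>" and P1: "properm \<Theta>1" and w: "properv w" and x: "properv x"
  shows "pairing L (rho (transpose L) (transpose \<Theta>1 *v w)) (rho L x)
       = pairing L1 (rho (transpose L1) w) (rho_e L1 (\<Theta> *v liftv (rho L x)))"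
proof -
  have "pairing L (rho (transpose L) (transpose \<Theta>1 *v w)) (rho L x)
      = at0 (\<Sum>i\<in>UNIV. (transpose \<Theta>1 *v w)$i * (Minv L *v x)$i)"
    by (rule pairing_eq[OF L x properv_mult[OF properm_transpose[OF P1] w]])
  also have "(\<Sum>i\<in>UNIV. (transpose \<Theta>1 *v w)$i * (Minv L *v x)$i)
      = (\<Sum>i\<in>UNIV. w$i * (\<Theta>1 *v (Minv L *v x))$i)"
    by (rule dot_transpose[symmetric])
  also have "\<Theta>1 *v (Minv L *v x) = Minv L1 *v (\<Theta> *v x)"
    by (simp add: matrix_vector_mul_assoc theta_rel[OF L L1 rel])
  also have "at0 (\<Sum>i\<in>UNIV. w$i * (Minv L1 *v (\<Theta> *v x))$i) = pairing L1 (rho (transpose L1) w) (rho L1 (\<Theta> *v x))"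
    by (rule pairing_eq[OF L1 properv_mult[OF P x] w, symmetric])
  also have "rho L1 (\<Theta> *v x) = rho_e L1 (\<Theta> *v liftv (rho L x))"
    by (rule phi_rho[OF L L1 rel P1, symmetric])
  finally show ?thesis .
qed

theorem theorem3p4:
  fixes L :: "'K::field poly ^ 'n ^ 'n" and L1 :: "'K poly ^ 'm ^ 'm"
    and \<Theta> \<Theta>1 :: "'K ratf ^ 'n ^ 'm"
    and \<phi> :: "'K poly ^ 'n \<Rightarrow> 'K poly ^ 'm"
  assumes "det L \<noteq> 0" and "det L1 \<noteq> 0"
    and "properm \<Theta>" and "properm \<Theta>1"
    and "\<Theta> ** liftm L = liftm L1 ** \<Theta>1"
    and "\<phi> = (\<lambda>\<xi>. rho_e L1 (\<Theta> *v liftv \<xi>))"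
  shows "(\<exists>\<psi>. is_dual_map L L1 \<phi> \<psi>) \<and>
         (\<forall>\<psi>. is_dual_map L L1 \<phi> \<psi> \<longrightarrow>
            (\<forall>w. properv w \<longrightarrow> \<psi> (rho (transpose L1) w) = rho (transpose L) (transpose \<Theta>1 *v w)))"
proof -
  note L = assms(1) and L1 = assms(2) and P = assms(3) and P1 = assms(4) and rel = assms(5) and ph = assms(6)
  let ?psi = "psi0 L L1 \<Theta>1"
  have pe: "\<And>w. properv w \<Longrightarrow> ?psi (rho (transpose L1) w) = rho (transpose L) (transpose \<Theta>1 *v w)"
    using psi0_eq[OF L L1 rel P] by blast
  have dual: "is_dual_map L L1 \<phi> ?psi"
    unfolding is_dual_map_def
  proof (intro conjI ballI allI impI)
    fix \<eta> assume "\<eta> \<in> U (transpose L1)"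
    then obtain w where w: "properv w" "\<eta> = rho (transpose L1) w" by (auto simp: U_def)
    show "?psi \<eta> \<in> U (transpose L)"
      using w pe properv_mult[OF properm_transpose[OF P1] w(1)] by (auto simp: U_def)
  next
    fix a b \<eta> \<eta>' assume "\<eta> \<in> U (transpose L1)" "\<eta>' \<in> U (transpose L1)"
    then obtain w w' where w: "properv w" "\<eta> = rho (transpose L1) w" "properv w'" "\<eta>' = rho (transpose L1) w'"
      by (auto simp: U_def)
    have "ksmult a \<eta> + ksmult b \<eta>' = rho (transpose L1) (cst a *s w + cst b *s w')"
      using w by (simp add: rho_lin)
    hence "?psi (ksmult a \<eta> + ksmult b \<eta>') = rho (transpose L) (transpose \<Theta>1 *v (cst a *s w + cst b *s w'))"
      using pe[OF properv_lin[OF w(1) w(3)]] by simp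
    also have "\<dots> = rho (transpose L) (cst a *s (transpose \<Theta>1 *v w) + cst b *s (transpose \<Theta>1 *v w'))"
      by (simp add: matrix_vector_right_distrib mv_scalar)
    also have "\<dots> = ksmult a (?psi \<eta>) + ksmult b (?psi \<eta>')"
      using w pe by (simp add: rho_lin)
    finally show "?psi (ksmult a \<eta> + ksmult b \<eta>') = ksmult a (?psi \<eta>) + ksmult b (?psi \<eta>')" .
  next
    fix \<eta> \<xi> assume "\<eta> \<in> U (transpose L1)" "\<xi> \<in> U L"
    then obtain w x where w: "properv w" "\<eta> = rho (transpose L1) w" "properv x" "\<xi> = rho L x"
      by (auto simp: U_def)
    show "pairing L (?psi \<eta>) \<xi> = pairing L1 \<eta> (\<phi> \<xi>)"
      using w pe psi0_pair[OF L L1 rel P P1 w(1) w(3)] ph by simp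
  qed
  moreover have "\<psi> (rho (transpose L1) w) = rho (transpose L) (transpose \<Theta>1 *v w)"
    if d: "is_dual_map L L1 \<phi> \<psi>" and w: "properv w" for \<psi> w
  proof -
    define \<eta> where "\<eta> = rho (transpose L1) w"
    have eU: "\<eta> \<in> U (transpose L1)" using w by (auto simp: U_def \<eta>_def)
    then have "\<psi> \<eta> \<in> U (transpose L)" using d by (auto simp: is_dual_map_def)
    then obtain y where y: "properv y" "\<psi> \<eta> = rho (transpose L) y" by (auto simp: U_def)
    have y0: "properv (transpose \<Theta>1 *v w)" using properv_mult[OF properm_transpose[OF P1] w] .
    have "rho (transpose L) y = rho (transpose L) (transpose \<Theta>1 *v w)"
    proof (rule nondeg[OF L])
      fix x :: "'K ratf ^'n" assume x: "properv x"
      have xU: "rho L x \<in> U L" using x by (auto simp: U_def)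
      have "at0 (\<Sum>i\<in>UNIV. y$i * (Minv L *v x)$i) = pairing L (\<psi> \<eta>) (rho L x)"
        using pairing_eq[OF L x y(1)] y(2) by simp
      also have "\<dots> = pairing L1 \<eta> (\<phi> (rho L x))" using d eU xU by (auto simp: is_dual_map_def)
      also have "\<dots> = pairing L (rho (transpose L) (transpose \<Theta>1 *v w)) (rho L x)"
        using psi0_pair[OF L L1 rel P P1 w x] ph \<eta>_def by simp
      also have "\<dots> = at0 (\<Sum>i\<in>UNIV. (transpose \<Theta>1 *v w)$i * (Minv L *v x)$i)"
        by (rule pairing_eq[OF L x y0])
      finally show "at0 (\<Sum>i\<in>UNIV. y$i * (Minv L *v x)$i) = at0 (\<Sum>i\<in>UNIV. (transpose \<Theta>1 *v w)$i * (Minv L *v x)$i)" .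
    qed
    thus ?thesis using y \<eta>_def by simp
  qed
  ultimately show ?thesis by blast
qed

end
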